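(* Let $\sigma$ be the logistic squasher $\sigma(x)=1/(1+e^{-x})$, let $0<\delta\le1$, $1\le\alpha_n\le\log n$, let $\mathbf{u},\mathbf{v}\in\mathbb{R}^d$ with $v^{(l)}-u^{(l)}\ge2\delta$ for $l\in\{1,\dots,d\}$, and let $x\in[-\alpha_n,\alpha_n]^d$. Let $L,r,n\in\mathbb{N}$ with $L\ge2$, $r\ge2d$, $n\ge8d$ and $n\ge\exp(r+1)$. For a weight vector $\mathbf{w}$ let $f_{\mathbf{w}}(x)=f^{(L)}_{1,1}(x)$, where $f^{(l)}_{1,i}(x)=\sigma\big(\sum_{j=1}^r w^{(l-1)}_{1,i,j}f^{(l-1)}_{1,j}(x)+w^{(l-1)}_{1,i,0}\big)$ for $l=2,\dots,L$ and $f^{(1)}_{1,i}(x)=\sigma\big(\sum_{j=1}^d w^{(0)}_{1,i,j}x^{(j)}+w^{(0)}_{1,i,0}\big)$, $i\in\{1,\dots,r\}$. Assume $\mathbf{w}$ satisfies: $w^{(0)}_{1,j,j}=\frac{4d(\log n)^2}{\delta}$ and $w^{(0)}_{1,j,0}=-\frac{4d(\log n)^2}{\delta}u^{(j)}$ for $j\in\{1,\dots,d\}$; $w^{(0)}_{1,j+d,j}=-\frac{4d(\log n)^2}{\delta}$ and $w^{(0)}_{1,j+d,0}=\frac{4d(\log n)^2}{\delta}v^{(j)}$ for $j\in\{1,\dots,d\}$; $w^{(0)}_{1,s,t}=0$ if $s\le2d$, $s\ne t$, $s\ne t+d$ and $t>0$; $w^{(1)}_{1,1,t}=8(\log n)^2$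 for $t\in\{1,\dots,2d\}$, $w^{(1)}_{1,1,0}=-8(\log n)^2(2d-\tfrac12)$, $w^{(1)}_{1,1,t}=0$ for $t>2d$; $w^{(l)}_{1,1,1}=6(\log n)^2$, $w^{(l)}_{1,1,0}=-3(\log n)^2$ and $w^{(l)}_{1,1,t}=0$ for $t>1$, for all $l\in\{2,\dots,L\}$. Let $\bar{\mathbf{w}}$ be a weight vector with $|\bar w^{(l)}_{1,i,j}-w^{(l)}_{1,i,j}|\le\log n$ for all $i,j$ and all $l=0,\dots,L-1$. Then $f_{\bar{\mathbf{w}}}(x)\ge1-\frac1n$ if $x\in[u^{(1)}+\delta,v^{(1)}-\delta]\times\dots\times[u^{(d)}+\delta,v^{(d)}-\delta]$, and $f_{\bar{\mathbf{w}}}(x)\le\frac1n$ if $x^{(i)}\notin[u^{(i)}-\delta,v^{(i)}+\delta]$ for some $i\in\{1,\dots,d\}$.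
   Context: $x^{(j)}$ denotes the $j$-th component of $x\in\mathbb{R}^d$; $\log$ is the natural logarithm. *)

theory Defs
  imports Complex_Main
begin

definition sigma :: "real \<Rightarrow> real" where
  "sigma x = 1 / (1 + exp (- x))"

text \<open>Inputs x :: nat \<Rightarrow> real with components
  x 1, ..., x d.  Weights w l i j stands for w^{(l)}_{1,i,j}.
  fnet d r w x l i = f^{(l)}_{1,i}(x) for l \<ge> 1 (the value at l = 0 is irrelevant).\<close>
fun fnet :: "nat \<Rightarrow> nat \<Rightarrow> (nat \<Rightarrow> nat \<Rightarrow> nat \<Rightarrow> real) \<Rightarrow> (nat \<Rightarrow> real) \<Rightarrow> nat \<Rightarrow> nat \<Rightarrow> real" where
  "fnet d r w x 0 i = 0"
| "fnet d r w x (Suc 0) i = sigma ((\<Sum>j=1..d. w 0 i j * x j) + w 0 i 0)"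
| "fnet d r w x (Suc (Suc k)) i =
     sigma ((\<Sum>j=1..r. w (Suc k) i j * fnet d r w x (Suc k) j) + w (Suc k) i 0)"

definition fw :: "nat \<Rightarrow> nat \<Rightarrow> nat \<Rightarrow> (nat \<Rightarrow> nat \<Rightarrow> nat \<Rightarrow> real) \<Rightarrow> (nat \<Rightarrow> real) \<Rightarrow> real" where
  "fw d r L w x = fnet d r w x L 1"

end

theory Submission
  imports Defs
begin
lemma sig_pos: "0 < sigma y" "sigma y < 1"
  unfolding sigma_def by (auto simp: field_simps add_pos_pos)

lemma sig_hi: assumes "c \<le> y" shows "1 - exp (- c) \<le> sigma y"
proof -
  have a: "exp (-y) \<le> exp (-c)" using assms by simp
  define a where "a = exp (-y)"
  have ap: "0 < a" unfolding a_def by simp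
  have "1 - a = (1 - a^2) / (1 + a)" using ap by (simp add: field_simps power2_eq_square)
  also have "\<dots> \<le> 1 / (1 + a)" using ap by (intro divide_right_mono) auto
  finally have "1 - exp (-y) \<le> 1 / (1 + exp (-y))" unfolding a_def .
  then show ?thesis unfolding sigma_def using a by linarith
qed

lemma sig_lo: assumes "y \<le> - c" shows "sigma y \<le> exp (- c)"
proof -
  have "sigma y \<le> 1 / exp (-y)" unfolding sigma_def
  proof (rule divide_left_mono)
    have "0 < 1 + exp (-y)" by (simp add: add_pos_pos)
    then show "0 < (1 + exp (- y)) * exp (- y)" by simp
  qed auto
  also have "\<dots> = exp y" by (simp add: exp_minus divide_inverse)
  also have "\<dots> \<le> exp (-c)" using assms by simp
  finally show ?thesis .
qed

lemma pert:
  fixes a b y :: "nat \<Rightarrow> real" and B M :: real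
  assumes "finite A" "\<forall>j\<in>A. \<bar>a j - b j\<bar> \<le> B" "\<forall>j\<in>A. \<bar>y j\<bar> \<le> M"
  shows "\<bar>(\<Sum>j\<in>A. a j * y j) - (\<Sum>j\<in>A. b j * y j)\<bar> \<le> card A * (B * M)"
proof -
  have "\<bar>(\<Sum>j\<in>A. a j * y j) - (\<Sum>j\<in>A. b j * y j)\<bar> = \<bar>\<Sum>j\<in>A. (a j - b j) * y j\<bar>"
    by (simp add: sum_subtractf left_diff_distrib)
  also have "\<dots> \<le> (\<Sum>j\<in>A. \<bar>(a j - b j) * y j\<bar>)" by (rule sum_abs)
  also have "\<dots> \<le> (\<Sum>j\<in>A. B * M)"
  proof (rule sum_mono)
    fix j assume j: "j \<in> A"
    have "\<bar>(a j - b j) * y j\<bar> = \<bar>a j - b j\<bar> * \<bar>y j\<bar>" by (simp add: abs_mult)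
    also have "\<dots> \<le> B * M" using assms j by (intro mult_mono) auto
    finally show "\<bar>(a j - b j) * y j\<bar> \<le> B * M" .
  qed
  also have "\<dots> = card A * (B * M)" by simp
  finally show ?thesis .
qed

lemma layer0:
  fixes wb w :: "nat \<Rightarrow> nat \<Rightarrow> nat \<Rightarrow> real" and x :: "nat \<Rightarrow> real"
  assumes p: "p \<in> {1..d}" and wz: "\<forall>j\<in>{1..d}. j \<noteq> p \<longrightarrow> w 0 s j = 0"
    and wp: "w 0 s p = c"
    and e: "\<forall>j. \<bar>wb 0 s j - w 0 s j\<bar> \<le> lam" and xb: "\<forall>j\<in>{1..d}. \<bar>x j\<bar> \<le> lam"
  shows "\<bar>(\<Sum>j=1..d. wb 0 s j * x j) - c * x p\<bar> \<le> d * lam^2"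
proof -
  have "(\<Sum>j=1..d. w 0 s j * x j) = (\<Sum>j=1..d. if j = p then c * x p else 0)"
    using wz wp by (intro sum.cong) auto
  also have "\<dots> = c * x p" using p by simp
  finally have s: "(\<Sum>j=1..d. w 0 s j * x j) = c * x p" .
  have "\<bar>(\<Sum>j=1..d. wb 0 s j * x j) - (\<Sum>j=1..d. w 0 s j * x j)\<bar> \<le> card {1..d} * (lam * lam)"
    using e xb by (intro pert) auto
  then show ?thesis using s by (simp add: power2_eq_square)
qed

lemma expbound: fixes a :: real assumes "0 \<le> a" shows "a * exp (- a) \<le> 1"
proof -
  have "a \<le> exp a" using exp_ge_add_one_self[of a] by linarith
  then show ?thesis by (simp add: exp_minus field_simps)
qed

theorem lemma5:
  fixes d r L n :: nat and \<delta> \<alpha> :: real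
    and u v x :: "nat \<Rightarrow> real"
    and w wb :: "nat \<Rightarrow> nat \<Rightarrow> nat \<Rightarrow> real"
  assumes d_pos: "d \<ge> 1"
    and delta: "0 < \<delta>" "\<delta> \<le> 1"
    and alpha: "1 \<le> \<alpha>" "\<alpha> \<le> ln (real n)"
    and uv: "\<forall>l\<in>{1..d}. v l - u l \<ge> 2 * \<delta>"
    and x_in: "\<forall>j\<in>{1..d}. - \<alpha> \<le> x j \<and> x j \<le> \<alpha>"
    and L: "L \<ge> 2" and r: "r \<ge> 2 * d"
    and n1: "n \<ge> 8 * d" and n2: "real n \<ge> exp (real r + 1)"
    and w0a: "\<forall>j\<in>{1..d}. w 0 j j = 4 * d * (ln n)^2 / \<delta> \<and>
                 w 0 j 0 = - (4 * d * (ln n)^2 / \<delta>) * u j"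
    and w0b: "\<forall>j\<in>{1..d}. w 0 (j + d) j = - (4 * d * (ln n)^2 / \<delta>) \<and>
                 w 0 (j + d) 0 = (4 * d * (ln n)^2 / \<delta>) * v j"
    and w0c: "\<forall>s t. 1 \<le> s \<and> s \<le> 2 * d \<and> s \<noteq> t \<and> s \<noteq> t + d \<and> t > 0 \<longrightarrow> w 0 s t = 0"
    and w1a: "\<forall>t\<in>{1..2*d}. w 1 1 t = 8 * (ln n)^2"
    and w1b: "w 1 1 0 = - 8 * (ln n)^2 * (2 * real d - 1/2)"
    and w1c: "\<forall>t. t > 2 * d \<longrightarrow> w 1 1 t = 0"
    and wl: "\<forall>l\<in>{2..L}. w l 1 1 = 6 * (ln n)^2 \<and> w l 1 0 = - 3 * (ln n)^2 \<and>
                (\<forall>t. t > 1 \<longrightarrow> w l 1 t = 0)"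
    and wb: "\<forall>l<L. \<forall>i j. \<bar>wb l i j - w l i j\<bar> \<le> ln n"
  shows "((\<forall>i\<in>{1..d}. u i + \<delta> \<le> x i \<and> x i \<le> v i - \<delta>) \<longrightarrow> fw d r L wb x \<ge> 1 - 1 / real n)
       \<and> ((\<exists>i\<in>{1..d}. x i \<notin> {u i - \<delta> .. v i + \<delta>}) \<longrightarrow> fw d r L wb x \<le> 1 / real n)"
proof -
  define lam where "lam = ln (real n)"
  define Q where "Q = lam^2"
  define K where "K = 4 * d * Q / \<delta>"
  define eps where "eps = exp (- (2 * d * Q))"
  define eta where "eta = exp (- Q)"
  define In where "In = (\<forall>i\<in>{1..d}. u i + \<delta> \<le> x i \<and> x i \<le> v i - \<delta>)"
  define Out where "Out = (\<exists>i\<in>{1..d}. x i \<notin> {u i - \<delta> .. v i + \<delta>})"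
  define f1 where "f1 t = fnet d r wb x (Suc 0) t" for t
  define S where "S s = (\<Sum>j=1..d. wb 0 s j * x j) + wb 0 s 0" for s
  have npos: "0 < real n" using n2 by (smt (verit) exp_gt_zero)
  have lamr: "real r + 1 \<le> lam" unfolding lam_def
    using ln_le_cancel_iff[of "exp (real r + 1)" "real n"] n2 npos by simp
  have lam3: "3 \<le> lam" using lamr r d_pos by linarith
  have Qlam: "lam \<le> Q" unfolding Q_def power2_eq_square
    using mult_left_mono[of 1 lam lam] lam3 by simp
  have Q9: "9 \<le> Q" unfolding Q_def power2_eq_square
    using mult_mono[of 3 lam 3 lam] lam3 by simp
  have rlam: "(real r + 1) * lam \<le> Q" unfolding Q_def power2_eq_square
    using mult_right_mono[OF lamr] lam3 by simp
  have dQ: "Q \<le> d * Q" using d_pos Q9 mult_right_mono[of 1 "real d" Q] by simp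
  have KQ: "K * \<delta> = 4 * d * Q" unfolding K_def using delta by simp
  have K0: "0 \<le> K" unfolding K_def using delta Q9 by simp
  have epsb: "2 * d * Q * eps \<le> 1" unfolding eps_def using Q9 by (intro expbound) simp
  have etab: "Q * eta \<le> 1" unfolding eta_def using Q9 by (intro expbound) simp
  have eta_n: "eta \<le> 1 / real n"
  proof -
    have "eta \<le> exp (- lam)" unfolding eta_def using Qlam by simp
    also have "\<dots> = 1 / real n" unfolding lam_def using npos by (simp add: exp_minus exp_ln divide_inverse)
    finally show ?thesis .
  qed
  have xb: "\<forall>j\<in>{1..d}. \<bar>x j\<bar> \<le> lam" using x_in alpha unfolding lam_def by force
  have wb0: "\<forall>i j. \<bar>wb 0 i j - w 0 i j\<bar> \<le> lam" using wb L unfolding lam_def by auto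
  have f1b: "\<forall>j. \<bar>f1 j\<bar> \<le> 1" unfolding f1_def using sig_pos by (simp add: less_imp_le)
  have f1S: "f1 t = sigma (S t)" for t unfolding f1_def S_def by simp
  have A: "\<bar>S i - K * (x i - u i)\<bar> \<le> 2 * d * Q" if i: "i \<in> {1..d}" for i
  proof -
    have "\<bar>(\<Sum>j=1..d. wb 0 i j * x j) - K * x i\<bar> \<le> d * lam^2"
    proof (rule layer0[where w = w])
      show "\<forall>j\<in>{1..d}. j \<noteq> i \<longrightarrow> w 0 i j = 0" using w0c i by auto
      show "w 0 i i = K" using w0a i unfolding K_def Q_def lam_def by auto
    qed (use i wb0 xb in auto)
    moreover have "w 0 i 0 = - K * u i" using w0a i unfolding K_def Q_def lam_def by auto
    then have "\<bar>wb 0 i 0 - (- K * u i)\<bar> \<le> lam" using wb0 by metis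
    ultimately show ?thesis unfolding S_def Q_def using dQ Qlam unfolding Q_def
      by (simp add: algebra_simps abs_le_iff)
  qed
  have B: "\<bar>S (i + d) - K * (v i - x i)\<bar> \<le> 2 * d * Q" if i: "i \<in> {1..d}" for i
  proof -
    have "\<bar>(\<Sum>j=1..d. wb 0 (i + d) j * x j) - (- K) * x i\<bar> \<le> d * lam^2"
    proof (rule layer0[where w = w])
      show "\<forall>j\<in>{1..d}. j \<noteq> i \<longrightarrow> w 0 (i + d) j = 0" using w0c i by auto
      show "w 0 (i + d) i = - K" using w0b i unfolding K_def Q_def lam_def by auto
    qed (use i wb0 xb in auto)
    moreover have "w 0 (i + d) 0 = K * v i" using w0b i unfolding K_def Q_def lam_def by auto
    then have "\<bar>wb 0 (i + d) 0 - K * v i\<bar> \<le> lam" using wb0 by metis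
    ultimately show ?thesis unfolding S_def Q_def using dQ Qlam unfolding Q_def
      by (simp add: algebra_simps abs_le_iff)
  qed
  have hi1: "1 - eps \<le> f1 t" if I: "In" and T: "t \<in> {1..2*d}" for t
  proof (cases "t \<le> d")
    case True
    then have i: "t \<in> {1..d}" using T by auto
    have "u t + \<delta> \<le> x t" using I i unfolding In_def by blast
    then have "K * \<delta> \<le> K * (x t - u t)" using K0
      by (intro mult_left_mono) auto
    then have "2 * d * Q \<le> S t" using A[OF i] KQ by (simp add: abs_le_iff)
    then show ?thesis unfolding f1S eps_def by (rule sig_hi)
  next
    case False
    define i where "i = t - d"
    have i: "i \<in> {1..d}" and t: "t = i + d" using T False unfolding i_def by auto
    have "x i \<le> v i - \<delta>" using I i unfolding In_def by blast
    then have "K * \<delta> \<le> K * (v i - x i)" using K0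
      by (intro mult_left_mono) auto
    then have "2 * d * Q \<le> S t" using B[OF i] KQ t by (simp add: abs_le_iff)
    then show ?thesis unfolding f1S eps_def by (rule sig_hi)
  qed
  have lo1: "\<exists>t\<in>{1..2*d}. f1 t \<le> eps" if "Out"
  proof -
    from that obtain i where i: "i \<in> {1..d}" and xi: "x i < u i - \<delta> \<or> x i > v i + \<delta>"
      unfolding Out_def by auto
    from xi show ?thesis
    proof
      assume "x i < u i - \<delta>"
      then have "K * (x i - u i) \<le> K * (- \<delta>)" using K0 by (intro mult_left_mono) auto
      then have "S i \<le> - (2 * d * Q)" using A[OF i] KQ by (simp add: abs_le_iff)
      then have "f1 i \<le> eps" unfolding f1S eps_def by (rule sig_lo)
      then show ?thesis using i by force
    next
      assume "x i > v i + \<delta>"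
      then have "K * (v i - x i) \<le> K * (- \<delta>)" using K0 by (intro mult_left_mono) auto
      then have "S (i + d) \<le> - (2 * d * Q)" using B[OF i] KQ by (simp add: abs_le_iff)
      then have "f1 (i + d) \<le> eps" unfolding f1S eps_def by (rule sig_lo)
      then show ?thesis using i by force
    qed
  qed
  define T where "T = (\<Sum>j=1..2*d. f1 j)"
  define I2 where "I2 = (\<Sum>j=1..r. wb 1 1 j * f1 j) + wb 1 1 0"
  have g2_eq: "fnet d r wb x (Suc (Suc 0)) 1 = sigma I2" unfolding I2_def f1_def by simp
  have sumw1: "(\<Sum>j=1..r. w 1 1 j * f1 j) = 8 * Q * T"
  proof -
    have e: "{1..r} = {1..2*d} \<union> {2*d+1..r}" using r by auto
    have "(\<Sum>j=1..r. w 1 1 j * f1 j) = (\<Sum>j=1..2*d. w 1 1 j * f1 j) + (\<Sum>j=2*d+1..r. w 1 1 j * f1 j)"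
      unfolding e by (rule sum.union_disjoint) auto
    also have "(\<Sum>j=2*d+1..r. w 1 1 j * f1 j) = 0" using w1c by (intro sum.neutral) auto
    also have "(\<Sum>j=1..2*d. w 1 1 j * f1 j) = (\<Sum>j=1..2*d. 8 * Q * f1 j)"
      using w1a unfolding Q_def lam_def by (intro sum.cong) auto
    also have "\<dots> = 8 * Q * T" unfolding T_def by (simp add: sum_distrib_left)
    finally show ?thesis by simp
  qed
  have p1: "\<bar>(\<Sum>j=1..r. wb 1 1 j * f1 j) - (\<Sum>j=1..r. w 1 1 j * f1 j)\<bar> \<le> card {1..r} * (lam * 1)"
    using wb L f1b unfolding lam_def by (intro pert) auto
  have b1: "\<bar>wb 1 1 0 - w 1 1 0\<bar> \<le> lam" using wb L unfolding lam_def by auto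
  have I2b: "\<bar>I2 - (8 * Q * T - 8 * Q * (2 * real d - 1/2))\<bar> \<le> Q"
    using p1 b1 sumw1 w1b rlam unfolding I2_def Q_def lam_def
    by (simp add: abs_le_iff algebra_simps)
  have eta9: "eta * Q \<le> 1" using etab by (simp add: mult.commute)
  have G2: "(In \<longrightarrow> 1 - eta \<le> fnet d r wb x (Suc (Suc 0)) 1) \<and> (Out \<longrightarrow> fnet d r wb x (Suc (Suc 0)) 1 \<le> eta)"
  proof (intro conjI impI)
    assume I: In
    have "(\<Sum>j=1..2*d. 1 - eps) \<le> T" unfolding T_def using hi1[OF I] by (intro sum_mono) auto
    then have "2 * d * (1 - eps) \<le> T" by simp
    then have "8 * Q * (2 * d * (1 - eps)) \<le> 8 * Q * T" using Q9 by (intro mult_left_mono) auto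
    then have "16 * d * Q - 8 * (2 * d * Q * eps) \<le> 8 * Q * T" by (simp add: algebra_simps)
    then have "Q \<le> I2" using I2b epsb Q9 by (simp add: abs_le_iff algebra_simps, linarith?)
    then show "1 - eta \<le> fnet d r wb x (Suc (Suc 0)) 1" unfolding g2_eq eta_def by (rule sig_hi)
  next
    assume O: Out
    then obtain t0 where t0: "t0 \<in> {1..2*d}" "f1 t0 \<le> eps" using lo1 by blast
    have "T = f1 t0 + (\<Sum>j\<in>{1..2*d} - {t0}. f1 j)" unfolding T_def using t0
      by (intro sum.remove) auto
    also have "(\<Sum>j\<in>{1..2*d} - {t0}. f1 j) \<le> (\<Sum>j\<in>{1..2*d} - {t0}. 1)"
      using f1b by (intro sum_mono) (auto simp: abs_le_iff)
    also have "\<dots> = 2 * real d - 1" using t0 d_pos by (simp add: card_Diff_singleton of_nat_diff)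
    finally have "T \<le> eps + (2 * real d - 1)" using t0 by simp
    then have "8 * Q * T \<le> 8 * Q * (eps + (2 * real d - 1))" using Q9 by (intro mult_left_mono) auto
    moreover have "Q * eps \<le> 2 * d * Q * eps"
      using d_pos Q9 by (intro mult_right_mono) (auto simp: eps_def)
    ultimately have "8 * Q * T \<le> 8 + 8 * Q * (2 * real d - 1)" using epsb
      by (simp add: algebra_simps)
    then have "I2 \<le> - Q" using I2b Q9 by (simp add: abs_le_iff algebra_simps, linarith?)
    then show "fnet d r wb x (Suc (Suc 0)) 1 \<le> eta" unfolding g2_eq eta_def by (rule sig_lo)
  qed
  have GI: "Suc (Suc m) \<le> L \<Longrightarrow> (In \<longrightarrow> 1 - eta \<le> fnet d r wb x (Suc (Suc m)) 1) \<and> (Out \<longrightarrow> fnet d r wb x (Suc (Suc m)) 1 \<le> eta)" for m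
  proof (induction m)
    case 0
    then show ?case using G2 by simp
  next
    case (Suc m)
    define l where "l = Suc (Suc m)"
    define F where "F j = fnet d r wb x l j" for j
    define I3 where "I3 = (\<Sum>j=1..r. wb l 1 j * F j) + wb l 1 0"
    have IH: "(In \<longrightarrow> 1 - eta \<le> F 1) \<and> (Out \<longrightarrow> F 1 \<le> eta)"
      using Suc unfolding F_def l_def by simp
    have eq: "fnet d r wb x (Suc (Suc (Suc m))) 1 = sigma I3" unfolding I3_def F_def l_def by simp
    have lL: "l \<in> {2..L}" "l < L" using Suc.prems unfolding l_def by auto
    have wl': "w l 1 1 = 6 * Q" "w l 1 0 = - 3 * Q" "\<forall>t. t > 1 \<longrightarrow> w l 1 t = 0"
      using wl lL(1) unfolding Q_def lam_def by auto
    have Fb: "\<forall>j. \<bar>F j\<bar> \<le> 1" unfolding F_def l_def using sig_pos by (simp add: less_imp_le)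
    have "(\<Sum>j=1..r. w l 1 j * F j) = (\<Sum>j=1..r. if j = 1 then 6 * Q * F 1 else 0)"
      using wl' by (intro sum.cong) auto
    also have "\<dots> = 6 * Q * F 1" using r d_pos by simp
    finally have sw: "(\<Sum>j=1..r. w l 1 j * F j) = 6 * Q * F 1" .
    have p: "\<bar>(\<Sum>j=1..r. wb l 1 j * F j) - (\<Sum>j=1..r. w l 1 j * F j)\<bar> \<le> card {1..r} * (lam * 1)"
      using wb lL Fb unfolding lam_def by (intro pert) auto
    have b: "\<bar>wb l 1 0 - w l 1 0\<bar> \<le> lam" using wb lL unfolding lam_def by auto
    have I3b: "\<bar>I3 - (6 * Q * F 1 - 3 * Q)\<bar> \<le> Q"
      using p b sw wl' rlam unfolding I3_def
      by (simp add: abs_le_iff algebra_simps, linarith?)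
    show ?case
    proof (intro conjI impI)
      assume I: In
      then have "6 * Q * (1 - eta) \<le> 6 * Q * F 1" using IH Q9 by (intro mult_left_mono) auto
      then have "Q \<le> I3" using I3b eta9 Q9 by (simp add: abs_le_iff algebra_simps, linarith?)
      then show "1 - eta \<le> fnet d r wb x (Suc (Suc (Suc m))) 1" unfolding eq eta_def by (rule sig_hi)
    next
      assume O: Out
      then have "6 * Q * F 1 \<le> 6 * Q * eta" using IH Q9 by (intro mult_left_mono) auto
      then have "I3 \<le> - Q" using I3b eta9 Q9 by (simp add: abs_le_iff algebra_simps, linarith?)
      then show "fnet d r wb x (Suc (Suc (Suc m))) 1 \<le> eta" unfolding eq eta_def by (rule sig_lo)
    qed
  qed
  have LL: "L = Suc (Suc (L - 2))" using L by simp
  have fin: "(In \<longrightarrow> 1 - eta \<le> fw d r L wb x) \<and> (Out \<longrightarrow> fw d r L wb x \<le> eta)"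
    unfolding fw_def using GI[of "L - 2"] LL by simp
  show ?thesis using fin eta_n unfolding In_def Out_def by auto
qed

end
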